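(* Let $m\ge1$, $s_1,\dots,s_m\in\mathbb{R}$ and $\alpha\in[0,1]$. For $\gamma\in[0,1]$ let $N(\gamma):=\sum_{i=1}^m\chi_{\alpha,\gamma}(s_i)$. Then $$\int_0^1\big(N(\gamma)-\gamma m\big)^2\,d\gamma\ \ge\ \frac1{12}.$$
   Context: For $r\in\mathbb{R}$, $\{r\}:=r-\lfloor r\rfloor$. For $\alpha\in\mathbb{R}$, $\gamma\in[0,1]$, $S_{\alpha,\alpha+\gamma}:=\{x\in[0,1]:\{x-\alpha\}\le\gamma\}$, and $\chi_{\alpha,\gamma}(x):=1$ if $\{x\}\in S_{\alpha,\alpha+\gamma}$, and $0$ otherwise. *)

theory Defs
  imports "HOL-Analysis.Analysis"
begin

definition S_set :: "real \<Rightarrow> real \<Rightarrow> real set" where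
  "S_set \<alpha> \<gamma> = {x \<in> {0..1}. frac (x - \<alpha>) \<le> \<gamma>}"

definition chi :: "real \<Rightarrow> real \<Rightarrow> real \<Rightarrow> real" where
  "chi \<alpha> \<gamma> x = (if frac x \<in> S_set \<alpha> \<gamma> then 1 else 0)"

definition Ncount :: "nat \<Rightarrow> (nat \<Rightarrow> real) \<Rightarrow> real \<Rightarrow> real \<Rightarrow> real" where
  "Ncount m s \<alpha> \<gamma> = (\<Sum>i=1..m. chi \<alpha> \<gamma> (s i))"

end

theory Submission
  imports Defs
begin

lemma chi_mono: "\<gamma> \<le> \<delta> \<Longrightarrow> chi \<alpha> \<gamma> x \<le> chi \<alpha> \<delta> x"
  by (auto simp: chi_def S_set_def)

lemma Ncount_mono: "\<gamma> \<le> \<delta> \<Longrightarrow> Ncount m s \<alpha> \<gamma> \<le> Ncount m s \<alpha> \<delta>"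
  unfolding Ncount_def by (intro sum_mono chi_mono)

lemma Ncount_nonneg: "0 \<le> Ncount m s \<alpha> \<gamma>"
  unfolding Ncount_def by (intro sum_nonneg) (auto simp: chi_def)

lemma Ncount_int: "Ncount m s \<alpha> \<gamma> \<in> \<int>"
  unfolding Ncount_def by (intro Ints_sum) (auto simp: chi_def)

lemma int_lb1:
  fixes n x :: real and j :: nat
  assumes "n \<in> \<int>" "real j \<le> x" "x \<le> real j + 1/2"
  shows "(x - real j)^2 \<le> (n - x)^2"
proof -
  obtain k where k: "n = of_int k" using assms(1) Ints_cases by blast
  show ?thesis
  proof (cases "k \<le> int j")
    case True
    then have "n \<le> real j" using k by simp
    then show ?thesis using assms by (subst abs_le_square_iff[symmetric]) auto
  next
    case False
    then have "n \<ge> real j + 1" using k by simp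
    then show ?thesis using assms by (subst abs_le_square_iff[symmetric]) auto
  qed
qed

lemma int_lb2:
  fixes n x :: real and j :: nat
  assumes "n \<in> \<int>" "real j + 1/2 \<le> x" "x \<le> real j + 1"
  shows "(real j + 1 - x)^2 \<le> (n - x)^2"
proof -
  obtain k where k: "n = of_int k" using assms(1) Ints_cases by blast
  show ?thesis
  proof (cases "k \<le> int j")
    case True
    then have "n \<le> real j" using k by simp
    then show ?thesis using assms by (subst abs_le_square_iff[symmetric]) auto
  next
    case False
    then have "n \<ge> real j + 1" using k by simp
    then show ?thesis using assms by (subst abs_le_square_iff[symmetric]) auto
  qed
qed

theorem lemma3p3:
  fixes m :: nat and s :: "nat \<Rightarrow> real" and \<alpha> :: real
  assumes "m \<ge> 1" and "\<alpha> \<in> {0..1}"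
  shows "integral {0..1} (\<lambda>\<gamma>. (Ncount m s \<alpha> \<gamma> - \<gamma> * real m)\<^sup>2) \<ge> 1/12"
proof -
  define N where "N = Ncount m s \<alpha>"
  define g where "g = (\<lambda>\<gamma>. (N \<gamma> - \<gamma> * real m)\<^sup>2)"
  have mpos: "real m > 0" using assms by simp
  have gint: "g integrable_on {a..b}" if "0 \<le> a" for a b
  proof -
    have eq: "g = (\<lambda>\<gamma>. (N \<gamma>)^2 - 2 * real m * (\<gamma> * N \<gamma>) + (real m)^2 * \<gamma>^2)"
      by (auto simp: g_def power2_eq_square algebra_simps)
    have m1: "mono_on {a..b} (\<lambda>\<gamma>. (N \<gamma>)^2)"
      by (auto simp: mono_on_def N_def intro!: power_mono Ncount_mono Ncount_nonneg)
    have m2: "mono_on {a..b} (\<lambda>\<gamma>. \<gamma> * N \<gamma>)"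
      using that by (auto simp: mono_on_def N_def intro!: mult_mono Ncount_mono Ncount_nonneg)
    have i1: "(\<lambda>\<gamma>. (N \<gamma>)^2) integrable_on {a..b}" by (rule integrable_on_mono_on[OF m1])
    have i2: "(\<lambda>\<gamma>. 2 * real m * (\<gamma> * N \<gamma>)) integrable_on {a..b}"
      using integrable_cmul[OF integrable_on_mono_on[OF m2], of "2 * real m"] by simp
    have i3: "(\<lambda>\<gamma>. (real m)^2 * \<gamma>^2) integrable_on {a..b}"
      by (intro integrable_continuous_interval continuous_intros)
    show ?thesis unfolding eq by (intro integrable_add integrable_diff i1 i2 i3)
  qed
  have piece1: "integral {real j / m .. (real j + 1/2) / m} g \<ge> 1 / (24 * m)" for j :: nat
  proof -
    let ?a = "real j / m" and ?b = "(real j + 1/2) / m"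
    have ab: "?a \<le> ?b" using mpos by (simp add: divide_right_mono)
    have "((\<lambda>\<gamma>. (\<gamma> * m - j)^2) has_integral
          ((\<lambda>\<gamma>. (\<gamma> * m - j)^3 / (3*m)) ?b - (\<lambda>\<gamma>. (\<gamma> * m - j)^3 / (3*m)) ?a)) {?a..?b}"
      apply (rule fundamental_theorem_of_calculus[OF ab])
      apply (subst has_real_derivative_iff_has_vector_derivative[symmetric])
      using mpos by (auto intro!: derivative_eq_intros simp: power2_eq_square field_simps)
    also have "(\<lambda>\<gamma>. (\<gamma> * m - j)^3 / (3*m)) ?b - (\<lambda>\<gamma>. (\<gamma> * m - j)^3 / (3*m)) ?a = 1/(24*m)"
      using mpos by (simp add: field_simps power3_eq_cube)
    finally have hi: "((\<lambda>\<gamma>. (\<gamma> * m - j)^2) has_integral 1/(24*m)) {?a..?b}" .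
    show ?thesis
    proof (rule has_integral_le[OF hi integrable_integral])
      show "g integrable_on {?a..?b}" using mpos by (intro gint) simp
      fix x assume x: "x \<in> {?a..?b}"
      have "real j \<le> x * m" "x * m \<le> real j + 1/2" using x mpos by (auto simp: field_simps)
      from int_lb1[OF _ this, of "N x"] show "(x * m - j)^2 \<le> g x"
        unfolding g_def N_def using Ncount_int by simp
    qed
  qed
  have piece2: "integral {(real j + 1/2) / m .. (real j + 1) / m} g \<ge> 1 / (24 * m)" for j :: nat
  proof -
    let ?a = "(real j + 1/2) / m" and ?b = "(real j + 1) / m"
    have ab: "?a \<le> ?b" using mpos by (simp add: divide_right_mono)
    have "((\<lambda>\<gamma>. (real j + 1 - \<gamma> * m)^2) has_integral
          ((\<lambda>\<gamma>. (\<gamma> * m - real j - 1)^3 / (3*m)) ?b - (\<lambda>\<gamma>. (\<gamma> * m - real j - 1)^3 / (3*m)) ?a)) {?a..?b}"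
      apply (rule fundamental_theorem_of_calculus[OF ab])
      apply (subst has_real_derivative_iff_has_vector_derivative[symmetric])
      using mpos by (auto intro!: derivative_eq_intros simp: power2_eq_square field_simps)
    also have "(\<lambda>\<gamma>. (\<gamma> * m - real j - 1)^3 / (3*m)) ?b - (\<lambda>\<gamma>. (\<gamma> * m - real j - 1)^3 / (3*m)) ?a = 1/(24*m)"
      using mpos by (simp add: field_simps power3_eq_cube)
    finally have hi: "((\<lambda>\<gamma>. (real j + 1 - \<gamma> * m)^2) has_integral 1/(24*m)) {?a..?b}" .
    show ?thesis
    proof (rule has_integral_le[OF hi integrable_integral])
      show "g integrable_on {?a..?b}" using mpos by (intro gint) simp
      fix x assume x: "x \<in> {?a..?b}"
      have "real j + 1/2 \<le> x * m" "x * m \<le> real j + 1" using x mpos by (auto simp: field_simps)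
      from int_lb2[OF _ this, of "N x"] show "(real j + 1 - x * m)^2 \<le> g x"
        unfolding g_def N_def using Ncount_int by simp
    qed
  qed
  have ind: "integral {0 .. real j / m} g \<ge> real j / (12 * m)" for j :: nat
  proof (induction j)
    case 0 then show ?case by simp
  next
    case (Suc j)
    have c1: "integral {0 .. real j / m} g + integral {real j / m .. (real j + 1/2) / m} g
              = integral {0 .. (real j + 1/2) / m} g"
      by (rule Henstock_Kurzweil_Integration.integral_combine) (use mpos in \<open>auto simp: divide_right_mono intro: gint\<close>)
    have c2: "integral {0 .. (real j + 1/2) / m} g + integral {(real j + 1/2) / m .. (real j + 1) / m} g
              = integral {0 .. (real j + 1) / m} g"
      by (rule Henstock_Kurzweil_Integration.integral_combine) (use mpos in \<open>auto simp: divide_right_mono intro: gint\<close>)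
    have "real (Suc j) / (12 * m) = real j / (12*m) + 1/(24*m) + 1/(24*m)"
      using mpos by (simp add: field_simps)
    also have "\<dots> \<le> integral {0 .. (real j + 1) / m} g"
      using Suc.IH piece1[of j] piece2[of j] c1 c2 by linarith
    finally show ?case by (simp add: add.commute)
  qed
  from ind[of m] mpos show ?thesis by (simp add: g_def N_def)
qed

end
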